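(* Let $N$ be the length of the maximal strictly decreasing sequence in $(\Lambda(n;r),\triangleright)$. Then for every $\lambda\in\Lambda(n;r)$, $B^+_k(R_\lambda)=0$ for $k>N$.
   Context: $R$ commutative ring with identity, $n,r$ positive integers. $\Lambda(n;r)$: compositions in $\mathbb{N}_0^n$ with sum $r$; $\nu\triangleright\mu$ means $\nu\ne\mu$ and $\sum_{s\le t}\nu_s\ge\sum_{s\le t}\mu_s$ for all $t$. $\Lambda(n,n;r)$: $n\times n$ nonnegative integer matrices with sum $r$. $S_R(n,r)=\mathrm{End}_{R\Sigma_r}((R^n)^{\otimes r})$ ($\Sigma_r$ permuting tensor positions) has basis $\xi_\omega=\sum_{(i,j)\in\omega}e_{i,j}$, where $e_{i,j}e_k=\delta_{jk}e_i$ on the basis $e_k$ ($k\in\{1,\dots,n\}^r$) and $(i,j)\in\omega$ means $\#\{q:i_q=s,j_q=t\}=\omega_{st}$ for all $s,t$; $\xi_\lambda=\xi_{\mathrm{diag}(\lambda)}$. $\Lambda^s(n,n;r)$: upper triangular $\omega$ with $\sum_{k\le l}(l-k)\omega_{kl}\ge s$. $S^+_R(n,r)$ = span of $\xi_\omega$, $\omega\in\Lambda^0(n,n;r)$; $J_R$ = span of $\xi_\omega$, $\omega\in\Lambda^1(n,n;r)$; $L_{n,r}=\bigoplus_{\lambda\in\Lambda(n;r)}R\xi_\lambda$. $R_\lambda$: the $S^+_R(n,r)$-module $R$ with $\xi_\lambda$ acting as $1$, $\xi_\mu$ ($\mu\neq\lambda$) and $J_R$ acting as $0$. For $k\ge0$,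 $B^+_k(R_\lambda)=S^+_R(n,r)\otimes J_R\otimes\cdots\otimes J_R\otimes R_\lambda$ with $k$ copies of $J_R$, all tensor products over $L_{n,r}$. *)

theory Defs
  imports Main
begin

definition compositions :: "nat \<Rightarrow> nat \<Rightarrow> (nat \<Rightarrow> nat) set" where
  "compositions n r = {la. (\<forall>s. s \<notin> {1..n} \<longrightarrow> la s = 0) \<and> (\<Sum>s=1..n. la s) = r}"

definition dom_gt :: "nat \<Rightarrow> (nat \<Rightarrow> nat) \<Rightarrow> (nat \<Rightarrow> nat) \<Rightarrow> bool" where
  "dom_gt n nu mu \<longleftrightarrow> nu \<noteq> mu \<and> (\<forall>t\<in>{1..n}. (\<Sum>s=1..t. mu s) \<le> (\<Sum>s=1..t. nu s))"

text \<open>Length (number of strict steps) of a maximal strictly decreasing sequence in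
  (Lambda(n;r), |>): the largest k admitting c 0 |> c 1 |> ... |> c k.\<close>
definition max_chain_length :: "nat \<Rightarrow> nat \<Rightarrow> nat" where
  "max_chain_length n r = Max {k. \<exists>c. (\<forall>i\<le>k. c i \<in> compositions n r) \<and>
                                       (\<forall>i<k. dom_gt n (c i) (c (Suc i)))}"

definition matrices :: "nat \<Rightarrow> nat \<Rightarrow> (nat \<Rightarrow> nat \<Rightarrow> nat) set" where
  "matrices n r = {w. (\<forall>s t. (s \<notin> {1..n} \<or> t \<notin> {1..n}) \<longrightarrow> w s t = 0) \<and>
                      (\<Sum>s=1..n. \<Sum>t=1..n. w s t) = r}"

definition diag_mat :: "(nat \<Rightarrow> nat) \<Rightarrow> nat \<Rightarrow> nat \<Rightarrow> nat" where
  "diag_mat la = (\<lambda>s t. if s = t then la s else 0)"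

definition Lambda_s :: "nat \<Rightarrow> nat \<Rightarrow> nat \<Rightarrow> (nat \<Rightarrow> nat \<Rightarrow> nat) set" where
  "Lambda_s n r s0 = {w \<in> matrices n r. (\<forall>k l. l < k \<longrightarrow> w k l = 0) \<and>
        s0 \<le> (\<Sum>k=1..n. \<Sum>l=k..n. (l - k) * w k l)}"

text \<open>Multi-indices {1..n}^r, indexing the basis e_i of (R^n)^{\<otimes> r}.\<close>
definition multi_indices :: "nat \<Rightarrow> nat \<Rightarrow> nat list set" where
  "multi_indices n r = {i. length i = r \<and> set i \<subseteq> {1..n}}"

text \<open>Endomorphisms of (R^n)^{\<otimes> r} as matrices w.r.t. the basis e_i: f(e_j) = sum_i A i j e_i.\<close>
type_synonym 'a tmat = "nat list \<Rightarrow> nat list \<Rightarrow> 'a"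

definition in_orbit :: "nat \<Rightarrow> nat \<Rightarrow> (nat \<Rightarrow> nat \<Rightarrow> nat) \<Rightarrow> nat list \<Rightarrow> nat list \<Rightarrow> bool" where
  "in_orbit n r w i j \<longleftrightarrow> i \<in> multi_indices n r \<and> j \<in> multi_indices n r \<and>
     (\<forall>s\<in>{1..n}. \<forall>t\<in>{1..n}. w s t = card {q. q < r \<and> i ! q = s \<and> j ! q = t})"

definition xi :: "nat \<Rightarrow> nat \<Rightarrow> (nat \<Rightarrow> nat \<Rightarrow> nat) \<Rightarrow> 'a::comm_ring_1 tmat" where
  "xi n r w = (\<lambda>i j. if in_orbit n r w i j then 1 else 0)"

text \<open>Composition of endomorphisms = matrix product.\<close>
definition mmul :: "nat \<Rightarrow> nat \<Rightarrow> 'a::comm_ring_1 tmat \<Rightarrow> 'a tmat \<Rightarrow> 'a tmat" where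
  "mmul n r A B = (\<lambda>i k. \<Sum>j\<in>multi_indices n r. A i j * B j k)"

definition xi_span :: "nat \<Rightarrow> nat \<Rightarrow> (nat \<Rightarrow> nat \<Rightarrow> nat) set \<Rightarrow> 'a::comm_ring_1 tmat set" where
  "xi_span n r W = {(\<lambda>i j. \<Sum>w\<in>W. c w * xi n r w i j) | c. True}"

definition Splus :: "nat \<Rightarrow> nat \<Rightarrow> 'a::comm_ring_1 tmat set" where
  "Splus n r = xi_span n r (Lambda_s n r 0)"

definition Jideal :: "nat \<Rightarrow> nat \<Rightarrow> 'a::comm_ring_1 tmat set" where
  "Jideal n r = xi_span n r (Lambda_s n r 1)"

definition factor :: "nat \<Rightarrow> nat \<Rightarrow> nat \<Rightarrow> 'a::comm_ring_1 tmat set" where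
  "factor n r p = (if p = 0 then Splus n r else Jideal n r)"

text \<open>Pure tuples (m_0,...,m_k, x) with m_0 in S^+, m_1..m_k in J, x in R_la = R.\<close>
definition valid_tuple :: "nat \<Rightarrow> nat \<Rightarrow> nat \<Rightarrow> 'a::comm_ring_1 tmat list \<times> 'a \<Rightarrow> bool" where
  "valid_tuple n r k t \<longleftrightarrow> length (fst t) = Suc k \<and> (\<forall>p\<le>k. fst t ! p \<in> factor n r p)"

definition delta :: "'b \<Rightarrow> 'b \<Rightarrow> int" where
  "delta t = (\<lambda>u. if u = t then 1 else 0)"

definition fdiff :: "('b \<Rightarrow> int) \<Rightarrow> ('b \<Rightarrow> int) \<Rightarrow> 'b \<Rightarrow> int" where
  "fdiff f g = (\<lambda>u. f u - g u)"

inductive_set gen_subgroup :: "('b \<Rightarrow> int) set \<Rightarrow> ('b \<Rightarrow> int) set" for G where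
  gen_zero: "(\<lambda>_. 0) \<in> gen_subgroup G"
| gen_base: "g \<in> G \<Longrightarrow> g \<in> gen_subgroup G"
| gen_diff: "a \<in> gen_subgroup G \<Longrightarrow> b \<in> gen_subgroup G \<Longrightarrow> fdiff a b \<in> gen_subgroup G"

text \<open>Action of the generators c*xi_mu (c in R, mu in Lambda(n;r)) of L_{n,r} on R_la.\<close>
definition act_R :: "(nat \<Rightarrow> nat) \<Rightarrow> (nat \<Rightarrow> nat) \<Rightarrow> 'a::comm_ring_1 \<Rightarrow> 'a \<Rightarrow> 'a" where
  "act_R la mu c x = (if mu = la then c * x else 0)"

definition scal_xi :: "nat \<Rightarrow> nat \<Rightarrow> 'a::comm_ring_1 \<Rightarrow> (nat \<Rightarrow> nat) \<Rightarrow> 'a tmat" where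
  "scal_xi n r c mu = (\<lambda>i j. c * xi n r (diag_mat mu) i j)"

text \<open>Defining relations of the tensor product over L_{n,r}: additivity in every factor and
  L-balancedness (it suffices to take l ranging over the additive generators c*xi_mu of L).\<close>
definition tensor_relations ::
  "nat \<Rightarrow> nat \<Rightarrow> nat \<Rightarrow> (nat \<Rightarrow> nat) \<Rightarrow> (('a::comm_ring_1 tmat list \<times> 'a) \<Rightarrow> int) set" where
  "tensor_relations n r k la =
     {fdiff (fdiff (delta (ms[p := (\<lambda>i j. a i j + b i j)], x)) (delta (ms[p := a], x))) (delta (ms[p := b], x))
        | ms x p a b. valid_tuple n r k (ms, x) \<and> p \<le> k \<and> a \<in> factor n r p \<and> b \<in> factor n r p}
   \<union> {fdiff (fdiff (delta (ms, x + y)) (delta (ms, x))) (delta (ms, y))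
        | ms x y. valid_tuple n r k (ms, x)}
   \<union> {fdiff (delta (ms[p := mmul n r (ms ! p) (scal_xi n r c mu)], x))
             (delta (ms[Suc p := mmul n r (scal_xi n r c mu) (ms ! Suc p)], x))
        | ms x p c mu. valid_tuple n r k (ms, x) \<and> p < k \<and> mu \<in> compositions n r}
   \<union> {fdiff (delta (ms[k := mmul n r (ms ! k) (scal_xi n r c mu)], x))
             (delta (ms, act_R la mu c x))
        | ms x c mu. valid_tuple n r k (ms, x) \<and> mu \<in> compositions n r}"

text \<open>B^+_k(R_la) = S^+ (x)_L J (x)_L ... (x)_L J (x)_L R_la (k copies of J), constructed as the
  free abelian group on pure tuples modulo the tensor relations; its carrier is the set of cosets.\<close>
definition Bplus :: "nat \<Rightarrow> nat \<Rightarrow> nat \<Rightarrow> (nat \<Rightarrow> nat) \<Rightarrow>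
     (('a::comm_ring_1 tmat list \<times> 'a) \<Rightarrow> int) set set" where
  "Bplus n r k la =
     (\<lambda>g. {h. fdiff h g \<in> gen_subgroup (tensor_relations n r k la)})
       ` gen_subgroup {delta t | t. valid_tuple n r k t}"

definition Bplus_zero :: "'a::comm_ring_1 itself \<Rightarrow> nat \<Rightarrow> nat \<Rightarrow> nat \<Rightarrow> (nat \<Rightarrow> nat) \<Rightarrow> bool" where
  "Bplus_zero _ n r k la \<longleftrightarrow>
     (Bplus n r k la :: (('a tmat list \<times> 'a) \<Rightarrow> int) set set) = {gen_subgroup (tensor_relations n r k la)}"

end

theory Submission
  imports Defs
begin


definition wt :: "nat \<Rightarrow> nat list \<Rightarrow> nat \<Rightarrow> nat" where
  "wt r i = (\<lambda>s. card {q. q < r \<and> i ! q = s})"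

lemma fin_lt[simp]: "finite {q. q < (r::nat) \<and> P q}"
  by (rule finite_subset[of _ "{..<r}"]) auto

lemma card_split:
  fixes r :: nat
  assumes "finite A" "\<forall>q<r. f q \<in> A"
  shows "card {q. q < r \<and> P q} = (\<Sum>t\<in>A. card {q. q < r \<and> P q \<and> f q = t})"
proof -
  have "{q. q < r \<and> P q} = (\<Union>t\<in>A. {q. q < r \<and> P q \<and> f q = t})" using assms by auto
  moreover have "card (\<Union>t\<in>A. {q. q < r \<and> P q \<and> f q = t}) = (\<Sum>t\<in>A. card {q. q < r \<and> P q \<and> f q = t})"
  proof (rule card_UN_disjoint)
    show "\<forall>t\<in>A. finite {q. q < r \<and> P q \<and> f q = t}"
      by (auto intro: finite_subset[of _ "{..<r}"])
  qed (auto simp: assms)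
  ultimately show ?thesis by simp
qed

lemma mi_nth: "i \<in> multi_indices n r \<Longrightarrow> q < r \<Longrightarrow> i ! q \<in> {1..n}"
  unfolding multi_indices_def by (auto intro!: nth_mem)

lemma mi_finite: "finite (multi_indices n r)"
proof -
  have "multi_indices n r = {i. set i \<subseteq> {1..n} \<and> length i = r}" unfolding multi_indices_def by auto
  then show ?thesis using finite_lists_length_eq[of "{1..n}" r] by simp
qed

lemma wt_sum:
  assumes "i \<in> multi_indices n r" "finite A"
  shows "(\<Sum>s\<in>A. wt r i s) = card {q. q < r \<and> i ! q \<in> A}"
proof -
  have "{q. q < r \<and> i ! q \<in> A} = (\<Union>s\<in>A. {q. q < r \<and> i ! q = s})" by auto
  moreover have "card (\<Union>s\<in>A. {q. q < r \<and> i ! q = s}) = (\<Sum>s\<in>A. card {q. q < r \<and> i ! q = s})"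
    by (rule card_UN_disjoint) (auto simp: assms)
  ultimately show ?thesis unfolding wt_def by simp
qed

lemma wt_out: "i \<in> multi_indices n r \<Longrightarrow> s \<notin> {1..n} \<Longrightarrow> wt r i s = 0"
  unfolding wt_def using mi_nth[of i n r] by fastforce

lemma wt_comp: "i \<in> multi_indices n r \<Longrightarrow> wt r i \<in> compositions n r"
proof -
  assume i: "i \<in> multi_indices n r"
  have "(\<Sum>s=1..n. wt r i s) = card {q. q < r \<and> i ! q \<in> {1..n}}" using wt_sum[OF i] by simp
  also have "{q. q < r \<and> i ! q \<in> {1..n}} = {..<r}" using mi_nth[OF i] by auto
  finally show ?thesis unfolding compositions_def using wt_out[OF i] by auto
qed

lemma wt_partial: "i \<in> multi_indices n r \<Longrightarrow> (\<Sum>s=1..t. wt r i s) = card {q. q < r \<and> i ! q \<le> t}"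
proof -
  assume i: "i \<in> multi_indices n r"
  have "(\<Sum>s=1..t. wt r i s) = card {q. q < r \<and> i ! q \<in> {1..t}}" using wt_sum[OF i] by simp
  also have "{q. q < r \<and> i ! q \<in> {1..t}} = {q. q < r \<and> i ! q \<le> t}" using mi_nth[OF i] by fastforce
  finally show ?thesis .
qed

lemma orbit_diag:
  assumes mu: "mu \<in> compositions n r"
  shows "in_orbit n r (diag_mat mu) i j \<longleftrightarrow> i \<in> multi_indices n r \<and> j = i \<and> wt r i = mu"
proof
  assume o: "in_orbit n r (diag_mat mu) i j"
  hence i: "i \<in> multi_indices n r" and j: "j \<in> multi_indices n r" unfolding in_orbit_def by auto
  have ij: "j = i"
  proof (rule nth_equalityI)
    show "length j = length i" using i j unfolding multi_indices_def by auto
  next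
    fix q assume "q < length j"
    hence q: "q < r" using j unfolding multi_indices_def by auto
    show "j ! q = i ! q"
    proof (rule ccontr)
      assume ne: "j ! q \<noteq> i ! q"
      have "diag_mat mu (i!q) (j!q) = card {q'. q' < r \<and> i ! q' = i!q \<and> j ! q' = j!q}"
        using o mi_nth[OF i q] mi_nth[OF j q] unfolding in_orbit_def by blast
      moreover have "card {q'. q' < r \<and> i ! q' = i!q \<and> j ! q' = j!q} > 0"
        using q by (subst card_gt_0_iff) auto
      moreover have "diag_mat mu (i!q) (j!q) = 0" using ne unfolding diag_mat_def by auto
      ultimately show False by linarith
    qed
  qed
  have "wt r i = mu"
  proof
    fix s show "wt r i s = mu s"
    proof (cases "s \<in> {1..n}")
      case True
      then have "diag_mat mu s s = card {q. q < r \<and> i ! q = s \<and> j ! q = s}"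
        using o unfolding in_orbit_def by blast
      then show ?thesis using ij unfolding diag_mat_def wt_def by simp
    next
      case False then show ?thesis using wt_out[OF i] mu unfolding compositions_def by auto
    qed
  qed
  then show "i \<in> multi_indices n r \<and> j = i \<and> wt r i = mu" using i ij by auto
next
  assume h: "i \<in> multi_indices n r \<and> j = i \<and> wt r i = mu"
  show "in_orbit n r (diag_mat mu) i j"
    unfolding in_orbit_def using h by (auto simp: diag_mat_def wt_def)
qed

lemma xi_diag: "mu \<in> compositions n r \<Longrightarrow>
   xi n r (diag_mat mu) i j = (if i \<in> multi_indices n r \<and> j = i \<and> wt r i = mu then 1 else 0)"
  unfolding xi_def using orbit_diag by simp

lemma mmul_right:
  assumes "mu \<in> compositions n r"
  shows "mmul n r A (scal_xi n r 1 mu) i k = (if k \<in> multi_indices n r \<and> wt r k = mu then A i k else 0)"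
proof -
  have e: "(\<lambda>j. A i j * scal_xi n r 1 mu j k) = (\<lambda>j. if j = k then (if k \<in> multi_indices n r \<and> wt r k = mu then A i k else 0) else 0)"
    using assms by (auto simp: scal_xi_def xi_diag)
  show ?thesis unfolding mmul_def e by (simp add: mi_finite)
qed

lemma mmul_left:
  assumes "mu \<in> compositions n r"
  shows "mmul n r (scal_xi n r 1 mu) B i k = (if i \<in> multi_indices n r \<and> wt r i = mu then B i k else 0)"
proof -
  have e: "(\<lambda>j. scal_xi n r 1 mu i j * B j k) = (\<lambda>j. if j = i then (if i \<in> multi_indices n r \<and> wt r i = mu then B i k else 0) else 0)"
    using assms by (auto simp: scal_xi_def xi_diag)
  show ?thesis unfolding mmul_def e by (simp add: mi_finite)
qed



definition rw :: "nat \<Rightarrow> (nat \<Rightarrow> nat \<Rightarrow> nat) \<Rightarrow> nat \<Rightarrow> nat" where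
  "rw n w = (\<lambda>s. if s \<in> {1..n} then \<Sum>t=1..n. w s t else 0)"
definition cw :: "nat \<Rightarrow> (nat \<Rightarrow> nat \<Rightarrow> nat) \<Rightarrow> nat \<Rightarrow> nat" where
  "cw n w = (\<lambda>t. if t \<in> {1..n} then \<Sum>s=1..n. w s t else 0)"

lemma orbit_wt:
  assumes o: "in_orbit n r w i j"
  shows "wt r i = rw n w" "wt r j = cw n w"
proof -
  have i: "i \<in> multi_indices n r" and j: "j \<in> multi_indices n r" using o unfolding in_orbit_def by auto
  show "wt r i = rw n w"
  proof
    fix s show "wt r i s = rw n w s"
    proof (cases "s \<in> {1..n}")
      case True
      have "wt r i s = (\<Sum>t\<in>{1..n}. card {q. q < r \<and> i ! q = s \<and> j ! q = t})"
        unfolding wt_def by (rule card_split) (use mi_nth[OF j] in auto)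
      also have "\<dots> = (\<Sum>t\<in>{1..n}. w s t)"
        by (rule sum.cong) (use o True in \<open>auto simp: in_orbit_def\<close>)
      finally show ?thesis using True unfolding rw_def by simp
    next
      case False then show ?thesis by (subst rw_def) (simp only: False if_False wt_out[OF i False])
    qed
  qed
  show "wt r j = cw n w"
  proof
    fix t show "wt r j t = cw n w t"
    proof (cases "t \<in> {1..n}")
      case True
      have "wt r j t = (\<Sum>s\<in>{1..n}. card {q. q < r \<and> j ! q = t \<and> i ! q = s})"
        unfolding wt_def by (rule card_split) (use mi_nth[OF i] in auto)
      also have "\<dots> = (\<Sum>s\<in>{1..n}. w s t)"
      proof (rule sum.cong)
        fix s assume s: "s \<in> {1..n}"
        have "{q. q < r \<and> j ! q = t \<and> i ! q = s} = {q. q < r \<and> i ! q = s \<and> j ! q = t}" by auto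
        then show "card {q. q < r \<and> j ! q = t \<and> i ! q = s} = w s t"
          using o True s by (auto simp: in_orbit_def)
      qed simp
      finally show ?thesis using True unfolding cw_def by simp
    next
      case False then show ?thesis by (subst cw_def) (simp only: False if_False wt_out[OF j False])
    qed
  qed
qed

lemma span_nz:
  assumes "m \<in> xi_span n r W" "m i j \<noteq> (0::'a::comm_ring_1)"
  shows "\<exists>w\<in>W. in_orbit n r w i j"
proof -
  obtain c where m: "m = (\<lambda>i j. \<Sum>w\<in>W. c w * (xi n r w i j :: 'a))" using assms(1) unfolding xi_span_def by auto
  have "(\<Sum>w\<in>W. c w * (xi n r w i j :: 'a)) \<noteq> 0" using assms(2) m by simp
  then obtain w where "w \<in> W" "c w * (xi n r w i j :: 'a) \<noteq> 0" by (meson sum.neutral)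
  then show ?thesis unfolding xi_def by (auto split: if_splits)
qed

lemma span_mi:
  assumes "m \<in> xi_span n r W" "m i j \<noteq> (0::'a::comm_ring_1)"
  shows "i \<in> multi_indices n r" "j \<in> multi_indices n r"
  using span_nz[OF assms] unfolding in_orbit_def by auto

lemma span_mask:
  assumes "m \<in> xi_span n r W"
  shows "(\<lambda>i j. if P (wt r i) (wt r j) then m i j else (0::'a::comm_ring_1)) \<in> xi_span n r W"
proof -
  obtain c where m: "m = (\<lambda>i j. \<Sum>w\<in>W. c w * (xi n r w i j :: 'a))" using assms(1) unfolding xi_span_def by auto
  define c' where "c' = (\<lambda>w. if P (rw n w) (cw n w) then c w else 0)"
  have "(\<lambda>i j. if P (wt r i) (wt r j) then m i j else 0) = (\<lambda>i j. \<Sum>w\<in>W. c' w * (xi n r w i j :: 'a))"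
  proof (intro ext)
    fix i j
    have "c' w * xi n r w i j = (if P (wt r i) (wt r j) then c w * xi n r w i j else 0)" for w
    proof (cases "in_orbit n r w i j")
      case True then show ?thesis using orbit_wt[OF True] unfolding c'_def by simp
    next
      case False then show ?thesis unfolding xi_def by simp
    qed
    then show "(if P (wt r i) (wt r j) then m i j else 0) = (\<Sum>w\<in>W. c' w * (xi n r w i j :: 'a))"
      using m by simp
  qed
  then show ?thesis unfolding xi_span_def by blast
qed

lemma span_zero: "(\<lambda>i j. 0::'a::comm_ring_1) \<in> xi_span n r W"
  unfolding xi_span_def by (rule CollectI, rule exI[of _ "\<lambda>_. 0"]) simp

lemma span_add:
  assumes "a \<in> xi_span n r W" "b \<in> xi_span n r W"
  shows "(\<lambda>i j. a i j + b i j :: 'a::comm_ring_1) \<in> xi_span n r W"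
proof -
  obtain c where a: "a = (\<lambda>i j. \<Sum>w\<in>W. c w * (xi n r w i j :: 'a))" using assms(1) unfolding xi_span_def by auto
  obtain d where b: "b = (\<lambda>i j. \<Sum>w\<in>W. d w * (xi n r w i j :: 'a))" using assms(2) unfolding xi_span_def by auto
  have "(\<lambda>i j. a i j + b i j) = (\<lambda>i j. \<Sum>w\<in>W. (c w + d w) * (xi n r w i j :: 'a))"
    unfolding a b by (simp add: distrib_right sum.distrib)
  then show ?thesis unfolding xi_span_def by (intro CollectI exI[of _ "\<lambda>w. c w + d w"] conjI) simp_all
qed

lemma dom_orbit:
  assumes w: "w \<in> Lambda_s n r 1" and o: "in_orbit n r w i j"
  shows "dom_gt n (wt r i) (wt r j)"
proof -
  have i: "i \<in> multi_indices n r" and j: "j \<in> multi_indices n r" using o unfolding in_orbit_def by auto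
  have le: "i ! q \<le> j ! q" if q: "q < r" for q
  proof (rule ccontr)
    assume "\<not> i ! q \<le> j ! q"
    hence "w (i!q) (j!q) = 0" using w unfolding Lambda_s_def by auto
    moreover have "w (i!q) (j!q) = card {q'. q' < r \<and> i ! q' = i!q \<and> j ! q' = j!q}"
      using o mi_nth[OF i q] mi_nth[OF j q] unfolding in_orbit_def by blast
    moreover have "card {q'. q' < r \<and> i ! q' = i!q \<and> j ! q' = j!q} > 0"
      using q by (subst card_gt_0_iff) auto
    ultimately show False by linarith
  qed
  have sub: "{q. q < r \<and> j ! q \<le> t} \<subseteq> {q. q < r \<and> i ! q \<le> t}" for t using le le_trans by blast
  have part: "(\<Sum>s=1..t. wt r j s) \<le> (\<Sum>s=1..t. wt r i s)" for t
    unfolding wt_partial[OF i] wt_partial[OF j] by (rule card_mono) (simp_all add: sub)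
  obtain k l where kl: "k < l" "w k l \<noteq> 0" "k \<in> {1..n}" "l \<in> {1..n}"
  proof -
    have "1 \<le> (\<Sum>k=1..n. \<Sum>l=k..n. (l - k) * w k l)" using w unfolding Lambda_s_def by blast
    hence "(\<Sum>k=1..n. \<Sum>l=k..n. (l - k) * w k l) \<noteq> 0" by linarith
    then obtain k where k: "k \<in> {1..n}" "(\<Sum>l=k..n. (l - k) * w k l) \<noteq> 0" by (meson sum.neutral)
    then obtain l where l: "l \<in> {k..n}" "(l - k) * w k l \<noteq> 0" by (meson sum.neutral)
    show ?thesis using that[of k l] k l by auto
  qed
  have "w k l = card {q. q < r \<and> i ! q = k \<and> j ! q = l}" using o kl unfolding in_orbit_def by blast
  hence "card {q. q < r \<and> i ! q = k \<and> j ! q = l} \<noteq> 0" using kl(2) by simp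
  hence "{q. q < r \<and> i ! q = k \<and> j ! q = l} \<noteq> {}" by (metis card.empty)
  then obtain q where q: "q < r" "i ! q = k" "j ! q = l" by blast
  have "q \<in> {q. q < r \<and> i ! q \<le> k}" "q \<notin> {q. q < r \<and> j ! q \<le> k}" using q kl(1) by auto
  hence "{q. q < r \<and> j ! q \<le> k} \<subset> {q. q < r \<and> i ! q \<le> k}" using sub[of k] by blast
  hence "card {q. q < r \<and> j ! q \<le> k} < card {q. q < r \<and> i ! q \<le> k}" by (rule psubset_card_mono[rotated]) simp
  hence "(\<Sum>s=1..k. wt r j s) \<noteq> (\<Sum>s=1..k. wt r i s)" unfolding wt_partial[OF i] wt_partial[OF j] by simp
  hence "wt r i \<noteq> wt r j" by metis
  then show ?thesis unfolding dom_gt_def using part by auto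
qed



lemma fdiff_eq: "fdiff a b = (\<lambda>u. a u - b u)" by (simp add: fdiff_def)

lemma g_neg: "a \<in> gen_subgroup G \<Longrightarrow> fdiff (\<lambda>_. 0) a \<in> gen_subgroup G"
  by (rule gen_diff[OF gen_zero])

lemma g_from: "fdiff a b \<in> gen_subgroup G \<Longrightarrow> b \<in> gen_subgroup G \<Longrightarrow> a \<in> gen_subgroup G"
proof -
  assume h: "fdiff a b \<in> gen_subgroup G" "b \<in> gen_subgroup G"
  have "fdiff (fdiff a b) (fdiff (\<lambda>_. 0) b) \<in> gen_subgroup G" by (rule gen_diff[OF h(1) g_neg[OF h(2)]])
  moreover have "fdiff (fdiff a b) (fdiff (\<lambda>_. 0) b) = a" by (simp add: fdiff_def)
  ultimately show ?thesis by simp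
qed

lemma g_from3: "fdiff (fdiff a b) c \<in> gen_subgroup G \<Longrightarrow> b \<in> gen_subgroup G \<Longrightarrow> c \<in> gen_subgroup G \<Longrightarrow> a \<in> gen_subgroup G"
  by (meson g_from)

lemma g_self3: "fdiff (fdiff a a) a \<in> gen_subgroup G \<Longrightarrow> a \<in> gen_subgroup G"
proof -
  assume h: "fdiff (fdiff a a) a \<in> gen_subgroup G"
  have "fdiff (\<lambda>_. 0) (fdiff (fdiff a a) a) = a" by (simp add: fdiff_def)
  with g_neg[OF h] show ?thesis by simp
qed

lemma factor_eq: "factor n r p = xi_span n r (Lambda_s n r (if p = 0 then 0 else 1))"
  unfolding factor_def Splus_def Jideal_def by simp

lemma valid_upd:
  assumes "valid_tuple n r k (ms, x)" "p \<le> k" "a \<in> factor n r p"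
  shows "valid_tuple n r k (ms[p := a], y)"
  using assms unfolding valid_tuple_def by (auto simp: nth_list_update)

lemma valid_nth: "valid_tuple n r k (ms, x) \<Longrightarrow> p \<le> k \<Longrightarrow> ms ! p \<in> factor n r p"
  unfolding valid_tuple_def by auto

context
  fixes n r k :: nat and la :: "nat \<Rightarrow> nat"
begin

abbreviation "S \<equiv> gen_subgroup (tensor_relations n r k la)"

lemma R1:
  assumes "valid_tuple n r k (ms, x)" "p \<le> k" "a \<in> factor n r p" "b \<in> factor n r p"
  shows "fdiff (fdiff (delta (ms[p := (\<lambda>i j. a i j + b i j)], x)) (delta (ms[p := a], x))) (delta (ms[p := b], x))
     \<in> (S :: (('a::comm_ring_1 tmat list \<times> 'a) \<Rightarrow> int) set)"
  apply (rule gen_base) unfolding tensor_relations_def using assms by blast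

lemma R2:
  assumes "valid_tuple n r k (ms, x)"
  shows "fdiff (fdiff (delta (ms, x + y)) (delta (ms, x))) (delta (ms, y))
     \<in> (S :: (('a::comm_ring_1 tmat list \<times> 'a) \<Rightarrow> int) set)"
  apply (rule gen_base) unfolding tensor_relations_def using assms by blast

lemma R3:
  assumes "valid_tuple n r k (ms, x)" "p < k" "mu \<in> compositions n r"
  shows "fdiff (delta (ms[p := mmul n r (ms ! p) (scal_xi n r c mu)], x))
             (delta (ms[Suc p := mmul n r (scal_xi n r c mu) (ms ! Suc p)], x))
     \<in> (S :: (('a::comm_ring_1 tmat list \<times> 'a) \<Rightarrow> int) set)"
  apply (rule gen_base) unfolding tensor_relations_def using assms by blast

lemma R4:
  assumes "valid_tuple n r k (ms, x)" "mu \<in> compositions n r"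
  shows "fdiff (delta (ms[k := mmul n r (ms ! k) (scal_xi n r c mu)], x))
             (delta (ms, act_R la mu c x))
     \<in> (S :: (('a::comm_ring_1 tmat list \<times> 'a) \<Rightarrow> int) set)"
  apply (rule gen_base) unfolding tensor_relations_def using assms by blast

lemma Z0:
  assumes "valid_tuple n r k (ms, x)" "p \<le> k"
  shows "delta (ms[p := (\<lambda>i j. 0)], x) \<in> (S :: (('a::comm_ring_1 tmat list \<times> 'a) \<Rightarrow> int) set)"
proof -
  have z: "(\<lambda>i j. 0::'a) \<in> factor n r p" unfolding factor_eq by (rule span_zero)
  have h: "fdiff (fdiff (delta (ms[p := (\<lambda>i j. 0::'a)], x)) (delta (ms[p := (\<lambda>i j. 0)], x))) (delta (ms[p := (\<lambda>i j. 0)], x))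
     \<in> (S :: (('a tmat list \<times> 'a) \<Rightarrow> int) set)"
    using R1[OF assms z z] by (simp only: add_0_left)
  show ?thesis by (rule g_self3[OF h])
qed

lemma X0:
  assumes "valid_tuple n r k (ms, x)"
  shows "delta (ms, 0) \<in> (S :: (('a::comm_ring_1 tmat list \<times> 'a) \<Rightarrow> int) set)"
proof -
  have v0: "valid_tuple n r k (ms, 0::'a)" using assms unfolding valid_tuple_def by simp
  have h: "fdiff (fdiff (delta (ms, 0::'a)) (delta (ms, 0))) (delta (ms, 0))
     \<in> (S :: (('a tmat list \<times> 'a) \<Rightarrow> int) set)"
    using R2[OF v0, of 0] by (simp only: add_0_left)
  show ?thesis by (rule g_self3[OF h])
qed

lemma SUMlem:
  assumes v: "valid_tuple n r k (ms, x)" and p: "p \<le> k" and V: "finite V"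
    and f: "\<forall>v\<in>V. f v \<in> factor n r p \<and> delta (ms[p := f v], x) \<in> (S :: (('a::comm_ring_1 tmat list \<times> 'a) \<Rightarrow> int) set)"
  shows "delta (ms[p := (\<lambda>i j. \<Sum>v\<in>V. f v i j)], x) \<in> (S :: (('a tmat list \<times> 'a) \<Rightarrow> int) set)
         \<and> (\<lambda>i j. \<Sum>v\<in>V. f v i j) \<in> factor n r p"
  using V f
proof (induction V rule: finite_induct)
  case empty
  show ?case using Z0[OF v p] unfolding factor_eq by (simp add: span_zero)
next
  case (insert v V)
  let ?b = "(\<lambda>i j. \<Sum>v\<in>V. f v i j)"
  have IH: "delta (ms[p := ?b], x) \<in> (S :: (('a tmat list \<times> 'a) \<Rightarrow> int) set)" "?b \<in> factor n r p"
    using insert by auto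
  have a: "f v \<in> factor n r p" "delta (ms[p := f v], x) \<in> (S :: (('a tmat list \<times> 'a) \<Rightarrow> int) set)"
    using insert by auto
  have v': "valid_tuple n r k (ms[p := ?b], x)" by (rule valid_upd[OF v p IH(2)])
  have eq: "(\<lambda>i j. \<Sum>v\<in>insert v V. f v i j) = (\<lambda>i j. f v i j + ?b i j)" using insert by simp
  from R1[OF v' p a(1) IH(2)] have "fdiff (fdiff (delta (ms[p := (\<lambda>i j. f v i j + ?b i j)], x)) (delta (ms[p := f v], x))) (delta (ms[p := ?b], x))
     \<in> (S :: (('a tmat list \<times> 'a) \<Rightarrow> int) set)" by simp
  hence "delta (ms[p := (\<lambda>i j. f v i j + ?b i j)], x) \<in> (S :: (('a tmat list \<times> 'a) \<Rightarrow> int) set)"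
    using a(2) IH(1) by (rule g_from3)
  moreover have "(\<lambda>i j. f v i j + ?b i j) \<in> factor n r p"
    using a(1) IH(2) unfolding factor_eq by (rule span_add)
  ultimately show ?case by (simp only: eq)
qed

end



definition Phi :: "nat \<Rightarrow> (nat \<Rightarrow> nat) \<Rightarrow> nat" where
  "Phi n f = (\<Sum>t=1..n. \<Sum>s=1..t. f s)"

lemma Phi_bound:
  assumes "f \<in> compositions n r" shows "Phi n f \<le> n * r"
proof -
  have "(\<Sum>s=1..t. f s) \<le> r" if "t \<in> {1..n}" for t
  proof -
    have "(\<Sum>s=1..t. f s) \<le> (\<Sum>s=1..n. f s)" by (rule sum_mono2) (use that in auto)
    then show ?thesis using assms unfolding compositions_def by simp
  qed
  then have "Phi n f \<le> (\<Sum>t=1..n. r)" unfolding Phi_def by (intro sum_mono) auto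
  then show ?thesis by simp
qed

lemma Phi_strict:
  assumes d: "dom_gt n nu mu" and nu: "nu \<in> compositions n r" and mu: "mu \<in> compositions n r"
  shows "Phi n mu < Phi n nu"
proof -
  have le: "\<forall>t\<in>{1..n}. (\<Sum>s=1..t. mu s) \<le> (\<Sum>s=1..t. nu s)" using d unfolding dom_gt_def by auto
  have "\<exists>t\<in>{1..n}. (\<Sum>s=1..t. mu s) < (\<Sum>s=1..t. nu s)"
  proof (rule ccontr)
    assume "\<not> ?thesis"
    hence eqp: "(\<Sum>s=1..t. mu s) = (\<Sum>s=1..t. nu s)" if "t \<le> n" for t
      using le that by (cases "t = 0") (auto simp: not_less intro: antisym)
    have "nu = mu"
    proof
      fix s show "nu s = mu s"
      proof (cases "s \<in> {1..n}")
        case True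
        then obtain t where t: "s = Suc t" "t < n" by (cases s) auto
        have "(\<Sum>s=1..Suc t. mu s) = (\<Sum>s=1..t. mu s) + mu (Suc t)" by (simp add: sum.cl_ivl_Suc)
        moreover have "(\<Sum>s=1..Suc t. nu s) = (\<Sum>s=1..t. nu s) + nu (Suc t)" by (simp add: sum.cl_ivl_Suc)
        ultimately show ?thesis using eqp[of t] eqp[of "Suc t"] t by simp
      next
        case False then show ?thesis using nu mu unfolding compositions_def by auto
      qed
    qed
    then show False using d unfolding dom_gt_def by auto
  qed
  then show ?thesis unfolding Phi_def by (intro sum_strict_mono_ex1) (use le in auto)
qed

lemma chain_bound:
  assumes c: "\<forall>i\<le>k. c i \<in> compositions n r" "\<forall>i<k. dom_gt n (c i) (c (Suc i))"
  shows "k \<le> n * r"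
proof -
  have "i + Phi n (c i) \<le> Phi n (c 0)" if "i \<le> k" for i
    using that
  proof (induction i)
    case (Suc i)
    have "Phi n (c (Suc i)) < Phi n (c i)"
      by (rule Phi_strict) (use c Suc.prems in auto)
    then show ?case using Suc by simp
  qed simp
  then show ?thesis using Phi_bound[of "c 0"] c by fastforce
qed

lemma no_long_chain:
  assumes "k > max_chain_length n r"
  shows "\<not> (\<exists>c. (\<forall>i\<le>k. c i \<in> compositions n r) \<and> (\<forall>i<k. dom_gt n (c i) (c (Suc i))))"
proof
  let ?K = "{k. \<exists>c. (\<forall>i\<le>k. c i \<in> compositions n r) \<and> (\<forall>i<k. dom_gt n (c i) (c (Suc i)))}"
  assume "\<exists>c. (\<forall>i\<le>k. c i \<in> compositions n r) \<and> (\<forall>i<k. dom_gt n (c i) (c (Suc i)))"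
  hence "k \<in> ?K" by simp
  moreover have "finite ?K"
    by (rule finite_subset[of _ "{..n*r}"]) (auto intro: chain_bound)
  ultimately have "k \<le> Max ?K" by simp
  then show False using assms unfolding max_chain_length_def by simp
qed



definition rweight :: "nat \<Rightarrow> 'a::comm_ring_1 tmat \<Rightarrow> (nat \<Rightarrow> nat) \<Rightarrow> bool" where
  "rweight r m mu \<longleftrightarrow> (\<forall>i j. m i j \<noteq> 0 \<longrightarrow> wt r j = mu)"

definition chain :: "nat \<Rightarrow> nat \<Rightarrow> nat \<Rightarrow> (nat \<Rightarrow> nat) \<Rightarrow> (nat \<Rightarrow> nat) \<Rightarrow> bool" where
  "chain n r d mu la \<longleftrightarrow> (\<exists>c. c 0 = mu \<and> c d = la \<and> (\<forall>i\<le>d. c i \<in> compositions n r) \<and>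
      (\<forall>i<d. dom_gt n (c i) (c (Suc i))))"

lemma mmul_id_right:
  assumes "(m :: 'a::comm_ring_1 tmat) \<in> factor n r p" "mu \<in> compositions n r" "rweight r m mu"
  shows "mmul n r m (scal_xi n r 1 mu) = m"
proof (intro ext)
  fix i j
  show "mmul n r m (scal_xi n r 1 mu) i j = m i j"
  proof (cases "m i j = 0")
    case False
    then have "j \<in> multi_indices n r" using span_mi(2)[of m n r] assms(1) unfolding factor_eq by blast
    then show ?thesis using False assms(3) unfolding mmul_right[OF assms(2)] rweight_def by auto
  qed (simp add: mmul_right[OF assms(2)])
qed

lemma mmul_left_mask:
  assumes "(m :: 'a::comm_ring_1 tmat) \<in> factor n r p" "mu \<in> compositions n r"
  shows "mmul n r (scal_xi n r 1 mu) m = (\<lambda>i j. if wt r i = mu then m i j else 0)"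
proof (intro ext)
  fix i j
  show "mmul n r (scal_xi n r 1 mu) m i j = (if wt r i = mu then m i j else 0)"
  proof (cases "m i j = 0")
    case False
    then have "i \<in> multi_indices n r" using span_mi(1)[of m n r] assms(1) unfolding factor_eq by blast
    then show ?thesis unfolding mmul_left[OF assms(2)] by auto
  qed (simp add: mmul_left[OF assms(2)])
qed

lemma decomp:
  assumes "(m :: 'a::comm_ring_1 tmat) \<in> factor n r p"
  shows "m = (\<lambda>i j. \<Sum>nu\<in>wt r ` multi_indices n r. (if wt r j = nu then m i j else 0))"
proof (intro ext)
  fix i j
  have "(\<Sum>nu\<in>wt r ` multi_indices n r. (if wt r j = nu then m i j else 0))
        = (if wt r j \<in> wt r ` multi_indices n r then m i j else 0)"
    by (simp add: mi_finite)
  moreover have "m i j = 0" if "j \<notin> multi_indices n r"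
    using span_mi(2)[of m n r _ i j] assms that unfolding factor_eq by blast
  ultimately show "m i j = (\<Sum>nu\<in>wt r ` multi_indices n r. (if wt r j = nu then m i j else 0))"
    by auto
qed

lemma chain_prepend:
  assumes "chain n r d nu la" "dom_gt n mu nu" "mu \<in> compositions n r"
  shows "chain n r (Suc d) mu la"
proof -
  obtain c where c: "c 0 = nu" "c d = la" "\<forall>i\<le>d. c i \<in> compositions n r" "\<forall>i<d. dom_gt n (c i) (c (Suc i))"
    using assms(1) unfolding chain_def by blast
  define c' where "c' = (\<lambda>i. if i = 0 then mu else c (i - 1))"
  have "c' 0 = mu" "c' (Suc d) = la" unfolding c'_def using c by auto
  moreover have "\<forall>i\<le>Suc d. c' i \<in> compositions n r" unfolding c'_def using c assms(3) by auto
  moreover have "\<forall>i<Suc d. dom_gt n (c' i) (c' (Suc i))"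
  proof (intro allI impI)
    fix i assume "i < Suc d"
    then show "dom_gt n (c' i) (c' (Suc i))" unfolding c'_def using c assms(2)
      by (cases i) auto
  qed
  ultimately show ?thesis unfolding chain_def by blast
qed

lemma mainQ:
  fixes n r k :: nat and la :: "nat \<Rightarrow> nat"
  shows "\<forall>p ms (x::'a::comm_ring_1) mu. p + d = k \<longrightarrow> valid_tuple n r k (ms, x) \<longrightarrow> mu \<in> compositions n r
     \<longrightarrow> rweight r (ms ! p) mu \<longrightarrow> \<not> chain n r d mu la
     \<longrightarrow> delta (ms, x) \<in> gen_subgroup (tensor_relations n r k la)"
proof (induction d)
  case 0
  show ?case
  proof (intro allI impI)
    fix p ms and x :: 'a and mu
    assume h: "p + 0 = k" "valid_tuple n r k (ms, x)" "mu \<in> compositions n r" "rweight r (ms ! p) mu"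
      "\<not> chain n r 0 mu la"
    have ne: "mu \<noteq> la"
    proof
      assume "mu = la"
      then have "chain n r 0 mu la" using h(3) unfolding chain_def by (intro exI[of _ "\<lambda>_. mu"]) simp
      with h(5) show False by simp
    qed
    have f: "ms ! k \<in> factor n r k" using valid_nth[OF h(2)] by simp
    have "mmul n r (ms ! k) (scal_xi n r 1 mu) = ms ! k" using mmul_id_right[OF f h(3)] h(1,4) by simp
    moreover have "ms[k := ms ! k] = ms" by simp
    ultimately have "fdiff (delta (ms, x)) (delta (ms, 0::'a)) \<in> gen_subgroup (tensor_relations n r k la)"
      using R4[OF h(2) h(3), where la=la and c=1] ne unfolding act_R_def by simp
    then show "delta (ms, x) \<in> gen_subgroup (tensor_relations n r k la)"
      using X0[OF h(2), where la=la] by (rule g_from)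
  qed
next
  case (Suc d)
  show ?case
  proof (intro allI impI)
    fix p ms and x :: 'a and mu
    assume h: "p + Suc d = k" "valid_tuple n r k (ms, x)" "mu \<in> compositions n r" "rweight r (ms ! p) mu"
      "\<not> chain n r (Suc d) mu la"
    have pk: "p < k" using h(1) by simp
    have fp: "ms ! p \<in> factor n r p" using valid_nth[OF h(2)] pk by simp
    have fs: "ms ! Suc p \<in> factor n r (Suc p)" using valid_nth[OF h(2)] pk by simp
    define m where "m = ms ! Suc p"
    define m' where "m' = (\<lambda>i j. if wt r i = mu then m i j else (0::'a))"
    have lft: "mmul n r (scal_xi n r 1 mu) (ms ! Suc p) = m'"
      unfolding m'_def m_def by (rule mmul_left_mask[OF fs h(3)])
    have "mmul n r (ms ! p) (scal_xi n r 1 mu) = ms ! p" by (rule mmul_id_right[OF fp h(3) h(4)])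
    hence r3: "fdiff (delta (ms, x)) (delta (ms[Suc p := m'], x)) \<in> gen_subgroup (tensor_relations n r k la)"
      using R3[OF h(2) pk h(3), where la=la and c=1] lft by simp
    have fm: "m \<in> factor n r (Suc p)" using fs unfolding m_def .
    have fm': "m' \<in> factor n r (Suc p)" unfolding m'_def using span_mask[of m n r _ "\<lambda>a b. a = mu"] fm
      unfolding factor_eq by simp
    define ms' where "ms' = ms[Suc p := m']"
    have v': "valid_tuple n r k (ms', x)" unfolding ms'_def by (rule valid_upd[OF h(2) _ fm']) (use pk in simp)
    define g where "g = (\<lambda>nu i j. if wt r j = nu then m' i j else (0::'a))"
    have m'eq: "m' = (\<lambda>i j. \<Sum>nu\<in>wt r ` multi_indices n r. g nu i j)" unfolding g_def by (rule decomp[OF fm'])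
    have "\<forall>nu\<in>wt r ` multi_indices n r. g nu \<in> factor n r (Suc p) \<and>
           delta (ms'[Suc p := g nu], x) \<in> gen_subgroup (tensor_relations n r k la)"
    proof
      fix nu assume nu: "nu \<in> wt r ` multi_indices n r"
      have nuc: "nu \<in> compositions n r" using nu wt_comp by blast
      have fg: "g nu \<in> factor n r (Suc p)" unfolding g_def using span_mask[of m' n r _ "\<lambda>a b. b = nu"] fm'
        unfolding factor_eq by simp
      have "delta (ms'[Suc p := g nu], x) \<in> gen_subgroup (tensor_relations n r k la)"
      proof (cases "g nu = (\<lambda>i j. 0)")
        case True then show ?thesis using Z0[OF v', where p="Suc p" and la=la] pk by simp
      next
        case False
        then obtain i j where ij: "g nu i j \<noteq> 0" by blast
        hence wj: "wt r j = nu" and wi: "wt r i = mu" and mij: "m i j \<noteq> 0" unfolding g_def m'_def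
          by (auto split: if_splits)
        obtain w where w: "w \<in> Lambda_s n r 1" "in_orbit n r w i j"
          using span_nz[OF fm[unfolded factor_eq] mij] by auto
        have dg: "dom_gt n mu nu" using dom_orbit[OF w] wi wj by simp
        have nch: "\<not> chain n r d nu la" using chain_prepend[OF _ dg h(3)] h(5) by blast
        have v'': "valid_tuple n r k (ms'[Suc p := g nu], x)" by (rule valid_upd[OF v' _ fg]) (use pk in simp)
        have len: "Suc p < length ms'" using v' pk unfolding valid_tuple_def by simp
        have rw: "rweight r ((ms'[Suc p := g nu]) ! (Suc p)) nu"
          using len unfolding rweight_def g_def by simp
        have "Suc p + d = k" using h(1) by simp
        from Suc.IH[rule_format, OF this v'' nuc rw nch] show ?thesis .
      qed
      with fg show "g nu \<in> factor n r (Suc p) \<and>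
           delta (ms'[Suc p := g nu], x) \<in> gen_subgroup (tensor_relations n r k la)" by blast
    qed
    from SUMlem[OF v' _ _ this] pk have "delta (ms'[Suc p := m'], x) \<in> gen_subgroup (tensor_relations n r k la)"
      unfolding m'eq[symmetric] by (simp add: mi_finite)
    hence "delta (ms[Suc p := m'], x) \<in> gen_subgroup (tensor_relations n r k la)" unfolding ms'_def by simp
    with r3 show "delta (ms, x) \<in> gen_subgroup (tensor_relations n r k la)" by (rule g_from)
  qed
qed



lemma all_valid_in:
  assumes "k > max_chain_length n r" and v: "valid_tuple n r k (ms, (x::'a::comm_ring_1))"
  shows "delta (ms, x) \<in> gen_subgroup (tensor_relations n r k la)"
proof -
  have f0: "ms ! 0 \<in> factor n r 0" using valid_nth[OF v] by simp
  define g where "g = (\<lambda>nu i j. if wt r j = nu then (ms ! 0) i j else (0::'a))"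
  have meq: "ms ! 0 = (\<lambda>i j. \<Sum>nu\<in>wt r ` multi_indices n r. g nu i j)" unfolding g_def by (rule decomp[OF f0])
  have "\<forall>nu\<in>wt r ` multi_indices n r. g nu \<in> factor n r 0 \<and>
           delta (ms[0 := g nu], x) \<in> gen_subgroup (tensor_relations n r k la)"
  proof
    fix nu assume nu: "nu \<in> wt r ` multi_indices n r"
    have nuc: "nu \<in> compositions n r" using nu wt_comp by blast
    have fg: "g nu \<in> factor n r 0" unfolding g_def using span_mask[of "ms ! 0" n r _ "\<lambda>a b. b = nu"] f0
      unfolding factor_eq by simp
    have v'': "valid_tuple n r k (ms[0 := g nu], x)" by (rule valid_upd[OF v _ fg]) simp
    have len: "0 < length ms" using v unfolding valid_tuple_def by simp
    have rw: "rweight r ((ms[0 := g nu]) ! 0) nu" using len unfolding rweight_def g_def by simp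
    have nch: "\<not> chain n r k nu la" using no_long_chain[OF assms(1)] unfolding chain_def by blast
    have "0 + k = k" by simp
    from mainQ[rule_format, OF this v'' nuc rw nch] fg
    show "g nu \<in> factor n r 0 \<and> delta (ms[0 := g nu], x) \<in> gen_subgroup (tensor_relations n r k la)" by blast
  qed
  from SUMlem[OF v _ _ this] have "delta (ms[0 := ms ! 0], x) \<in> gen_subgroup (tensor_relations n r k la)"
    by (subst meq) (simp add: mi_finite)
  then show ?thesis by simp
qed

theorem corollary4p5:
  fixes n r k :: nat and la :: "nat \<Rightarrow> nat"
  assumes "n \<ge> 1" and "r \<ge> 1"
    and "la \<in> compositions n r"
    and "k > max_chain_length n r"
  shows "Bplus_zero TYPE('a::comm_ring_1) n r k la"
proof -
  let ?S = "gen_subgroup (tensor_relations n r k la) :: (('a tmat list \<times> 'a) \<Rightarrow> int) set"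
  have gin: "g \<in> ?S" if "g \<in> gen_subgroup {delta t | t. valid_tuple n r k (t :: 'a tmat list \<times> 'a)}" for g
    using that
  proof (induction rule: gen_subgroup.induct)
    case gen_zero then show ?case by (rule gen_subgroup.gen_zero)
  next
    case (gen_base g)
    then obtain ms x where "g = delta (ms, x)" "valid_tuple n r k (ms, x :: 'a)" by auto
    then show ?case using all_valid_in[OF assms(4)] by simp
  next
    case (gen_diff a b) then show ?case by (blast intro: gen_subgroup.gen_diff)
  qed
  have coset: "{h. fdiff h g \<in> ?S} = ?S" if "g \<in> ?S" for g
  proof
    show "{h. fdiff h g \<in> ?S} \<subseteq> ?S" using g_from that by blast
    show "?S \<subseteq> {h. fdiff h g \<in> ?S}" using gen_subgroup.gen_diff that by blast
  qed
  have "Bplus n r k la = {?S}"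
  proof -
    have "Bplus n r k la = (\<lambda>g. ?S) ` gen_subgroup {delta t | t. valid_tuple n r k (t :: 'a tmat list \<times> 'a)}"
      unfolding Bplus_def using coset gin by (intro image_cong) auto
    also have "\<dots> = {?S}" using gen_subgroup.gen_zero by blast
    finally show ?thesis .
  qed
  then show ?thesis unfolding Bplus_zero_def by simp
qed

end
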